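(* Fix a real number $\sigma$. There exist constants $C>0$ and $V_0>0$, depending only on $\sigma$, such that for every integer $r\ge1$ and every real $v$ with $|v|\ge V_0$, writing $s=\sigma+iv$, $$\left|\binom{r+s-1}{r}\right|\le C\,\frac{(r+|v|)^{\sigma-1/2}\,e^{|\sigma+iv|}}{r^{1/2}\,|v|^{\sigma-1/2}}\exp\left(\frac{\pi}{2}|v|\right).$$
   Context: For complex $s$ and integer $r\ge0$, $\binom{r+s-1}{r}=\frac{s(s+1)\cdots(s+r-1)}{r!}=\frac{\Gamma(r+s)}{r!\,\Gamma(s)}$. *)

theory Defs
  imports "HOL-Analysis.Analysis"
begin

end

theory Submission
  imports Defs
begin
lemma L1: fixes s :: complex shows "norm ((of_nat r + s - 1) gchoose r) = (\<Prod>k<r. norm (s + of_nat k) / real (Suc k))"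
proof -
  have "(of_nat r + s - 1) gchoose r = pochhammer s r / fact r"
    by (simp add: gbinomial_pochhammer')
  also have "\<dots> = (\<Prod>k<r. (s + of_nat k)) / (\<Prod>k<r. of_nat (Suc k))"
    by (simp add: pochhammer_prod fact_prod_Suc atLeast0LessThan)
  finally have "norm ((of_nat r + s - 1) gchoose r) = (\<Prod>k<r. norm (s + of_nat k)) / (\<Prod>k<r. norm (of_nat (Suc k) :: complex))"
    by (simp add: norm_divide prod_norm)
  then show ?thesis
    by (simp add: prod_dividef del: of_nat_Suc)
qed

lemma L2:
  fixes z :: "nat \<Rightarrow> complex"
  assumes "m \<le> N" "N \<ge> 1" "\<And>k. k < m \<Longrightarrow> norm (z k) \<le> real N + real k"
  shows "(\<Prod>k<m. norm (z k) / real (Suc k)) \<le> 4 ^ N"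
proof -
  have "(\<Prod>k<m. norm (z k) / real (Suc k)) \<le> (\<Prod>k<m. (real N + real k) / real (Suc k))"
    by (intro prod_mono) (auto intro: divide_right_mono assms(3))
  also have "\<dots> = pochhammer (real N) m / fact m"
    by (simp add: pochhammer_prod fact_prod_Suc atLeast0LessThan prod_dividef)
  also have "\<dots> = real (N + m - 1) gchoose m"
    using assms(2) by (simp add: gbinomial_pochhammer' of_nat_diff)
  also have "\<dots> = real ((N + m - 1) choose m)"
    by (simp add: binomial_gbinomial)
  also have "\<dots> \<le> 2 ^ (N + m - 1)"
    using binomial_le_pow2 by (metis of_nat_le_iff of_nat_numeral of_nat_power)
  also have "\<dots> \<le> 2 ^ (2 * N)"
    using assms by (intro power_increasing) auto
  also have "\<dots> = 4 ^ N" by (simp add: power_mult)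
  finally show ?thesis .
qed

lemma L3:
  fixes x V :: real
  assumes "x > 0"
  shows "sqrt (x\<^sup>2 + V\<^sup>2) \<le> x * exp (V\<^sup>2 / (2 * x\<^sup>2))"
proof -
  have "x\<^sup>2 + V\<^sup>2 = x\<^sup>2 * (1 + V\<^sup>2 / x\<^sup>2)" using assms by (simp add: field_simps)
  also have "\<dots> \<le> x\<^sup>2 * exp (V\<^sup>2 / x\<^sup>2)"
    by (intro mult_left_mono exp_ge_add_one_self) auto
  also have "\<dots> = (x * exp (V\<^sup>2 / (2 * x\<^sup>2)))\<^sup>2"
    by (simp add: power_mult_distrib exp_double[symmetric] power2_eq_square[of "exp _"] flip: exp_add)
  finally show ?thesis
    using assms by (intro real_le_lsqrt) auto
qed

lemma L5:
  fixes \<sigma> :: real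
  assumes "real N + \<sigma> - 1 > 0" "N \<le> r"
  shows "(\<Sum>k=N..<r. 1 / (real k + \<sigma>)\<^sup>2) \<le> 1 / (real N + \<sigma> - 1)"
proof -
  define f where "f k = - 1 / (real k + \<sigma> - 1)" for k
  have "(\<Sum>k=N..<r. 1 / (real k + \<sigma>)\<^sup>2) \<le> (\<Sum>k=N..<r. f (Suc k) - f k)"
  proof (intro sum_mono)
    fix k assume "k \<in> {N..<r}"
    then have a: "real k + \<sigma> - 1 > 0" using assms by auto
    have "f (Suc k) - f k = 1 / ((real k + \<sigma> - 1) * (real k + \<sigma>))"
      using a unfolding f_def by (simp add: field_simps)
    also have "\<dots> \<ge> 1 / (real k + \<sigma>)\<^sup>2"
      using a by (intro divide_left_mono) (auto simp: power2_eq_square intro!: mult_pos_pos)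
    finally show "1 / (real k + \<sigma>)\<^sup>2 \<le> f (Suc k) - f k" .
  qed
  also have "\<dots> = f r - f N" using assms(2) by (rule sum_Suc_diff')
  also have "\<dots> \<le> 1 / (real N + \<sigma> - 1)"
    using assms unfolding f_def by auto
  finally show ?thesis .
qed

lemma L4:
  fixes \<sigma> :: real
  assumes "N \<ge> 1" "N \<le> r" "real N + \<sigma> > 0"
  shows "(\<Prod>k=N..<r. (real k + \<sigma>) / real (Suc k)) \<le> real r powr (\<sigma> - 1) * real (Suc N) powr \<bar>\<sigma> - 1\<bar>"
proof -
  have "(\<Prod>k=N..<r. (real k + \<sigma>) / real (Suc k)) \<le> (\<Prod>k=N..<r. exp ((\<sigma> - 1) / real (Suc k)))"
  proof (intro prod_mono conjI)
    fix k assume "k \<in> {N..<r}"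
    then have "real k + \<sigma> > 0" using assms by auto
    then show "0 \<le> (real k + \<sigma>) / real (Suc k)" by simp
    have "(real k + \<sigma>) / real (Suc k) = 1 + (\<sigma> - 1) / real (Suc k)"
      by (simp add: field_simps)
    then show "(real k + \<sigma>) / real (Suc k) \<le> exp ((\<sigma> - 1) / real (Suc k))"
      by (metis exp_ge_add_one_self)
  qed
  also have "\<dots> = exp (\<Sum>k=N..<r. (\<sigma> - 1) / real (Suc k))"
    by (simp add: exp_sum)
  also have "\<dots> \<le> real r powr (\<sigma> - 1) * real (Suc N) powr \<bar>\<sigma> - 1\<bar>"
  proof (cases "\<sigma> \<ge> 1")
    case True
    have "(\<Sum>k=N..<r. (\<sigma> - 1) / real (Suc k)) \<le> (\<Sum>k=N..<r. (\<sigma> - 1) * ln (real (Suc k)) - (\<sigma> - 1) * ln (real k))"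
    proof (intro sum_mono)
      fix k assume "k \<in> {N..<r}"
      then have k: "real k \<ge> 1" using assms by auto
      have "ln (real k / real (Suc k)) \<le> real k / real (Suc k) - 1"
        using k by (intro ln_le_minus_one) auto
      also have "\<dots> = - 1 / real (Suc k)" by (simp add: field_simps)
      finally have "1 / real (Suc k) \<le> ln (real (Suc k)) - ln (real k)"
        using k by (simp add: ln_div)
      from mult_left_mono[OF this, of "\<sigma> - 1"] True
      show "(\<sigma> - 1) / real (Suc k) \<le> (\<sigma> - 1) * ln (real (Suc k)) - (\<sigma> - 1) * ln (real k)"
        by (simp add: algebra_simps)
    qed
    also have "\<dots> = (\<sigma> - 1) * ln (real r) - (\<sigma> - 1) * ln (real N)"
      using sum_Suc_diff'[OF assms(2), of "\<lambda>k. (\<sigma> - 1) * ln (real k)"] by simp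
    finally have "exp (\<Sum>k=N..<r. (\<sigma> - 1) / real (Suc k)) \<le> exp ((\<sigma> - 1) * ln (real r) - (\<sigma> - 1) * ln (real N))"
      by simp
    also have "\<dots> = real r powr (\<sigma> - 1) / real N powr (\<sigma> - 1)"
      using assms by (simp add: powr_def exp_diff)
    also have "\<dots> \<le> real r powr (\<sigma> - 1)"
    proof -
      have "1 \<le> real N powr (\<sigma> - 1)" using assms True by (auto simp: ge_one_powr_ge_zero)
      then have "real r powr (\<sigma> - 1) / real N powr (\<sigma> - 1) \<le> real r powr (\<sigma> - 1) / 1"
        using assms by (intro divide_left_mono) auto
      then show ?thesis by simp
    qed
    also have "\<dots> \<le> real r powr (\<sigma> - 1) * real (Suc N) powr \<bar>\<sigma> - 1\<bar>"
      by (intro mult_le_cancel_left1[THEN iffD2] impI) (auto simp: ge_one_powr_ge_zero)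
    finally show ?thesis .
  next
    case False
    have "(\<Sum>k=N..<r. (\<sigma> - 1) / real (Suc k)) \<le> (\<Sum>k=N..<r. (\<sigma> - 1) * ln (real (Suc (Suc k))) - (\<sigma> - 1) * ln (real (Suc k)))"
    proof (intro sum_mono)
      fix k assume "k \<in> {N..<r}"
      have "ln (real (Suc (Suc k)) / real (Suc k)) \<le> real (Suc (Suc k)) / real (Suc k) - 1"
        by (intro ln_le_minus_one) auto
      also have "\<dots> = 1 / real (Suc k)" by (simp add: field_simps)
      finally have "ln (real (Suc (Suc k))) - ln (real (Suc k)) \<le> 1 / real (Suc k)"
        by (simp add: ln_div del: of_nat_Suc)
      from mult_left_mono_neg[OF this, of "\<sigma> - 1"] False
      show "(\<sigma> - 1) / real (Suc k) \<le> (\<sigma> - 1) * ln (real (Suc (Suc k))) - (\<sigma> - 1) * ln (real (Suc k))"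
        by (simp add: algebra_simps)
    qed
    also have "\<dots> = (\<sigma> - 1) * ln (real (Suc r)) - (\<sigma> - 1) * ln (real (Suc N))"
      using sum_Suc_diff'[OF assms(2), of "\<lambda>k. (\<sigma> - 1) * ln (real (Suc k))"] by simp
    finally have "exp (\<Sum>k=N..<r. (\<sigma> - 1) / real (Suc k)) \<le> exp ((\<sigma> - 1) * ln (real (Suc r)) - (\<sigma> - 1) * ln (real (Suc N)))"
      by simp
    also have "\<dots> = real (Suc r) powr (\<sigma> - 1) * real (Suc N) powr (1 - \<sigma>)"
    proof -
      have "(\<sigma> - 1) * ln (real (Suc r)) - (\<sigma> - 1) * ln (real (Suc N)) = (\<sigma> - 1) * ln (real (Suc r)) + (1 - \<sigma>) * ln (real (Suc N))"
        by (simp add: algebra_simps)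
      then show ?thesis
        by (simp only: exp_add powr_def) simp
    qed
    also have "\<dots> \<le> real r powr (\<sigma> - 1) * real (Suc N) powr \<bar>\<sigma> - 1\<bar>"
    proof -
      have "\<bar>\<sigma> - 1\<bar> = 1 - \<sigma>" using False by simp
      moreover have "real (Suc r) powr (\<sigma> - 1) \<le> real r powr (\<sigma> - 1)"
        using False assms by (intro powr_mono2') auto
      ultimately show ?thesis by (simp add: mult_right_mono del: of_nat_Suc)
    qed
    finally show ?thesis .
  qed
  finally show ?thesis .
qed
lemma L6:
  fixes x D :: real
  assumes "x > 0" "D \<ge> 0"
  shows "x powr D \<le> exp (D * ln (8 * D + 8)) * exp (x / 8)"
proof -
  define a where "a = 8 * D + 8"
  have a: "a > 0" using assms unfolding a_def by simp
  have "ln (x / a) \<le> x / a - 1" using assms a by (intro ln_le_minus_one) auto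
  then have "ln x \<le> ln a + x / a" using assms a by (simp add: ln_div)
  then have "D * ln x \<le> D * ln a + D * x / a"
    using assms by (metis distrib_left mult_left_mono times_divide_eq_right)
  also have "D * x / a \<le> x / 8"
    using assms a unfolding a_def by (simp add: field_simps)
  finally have "D * ln x \<le> D * ln a + x / 8" by simp
  then show ?thesis
    using assms unfolding a_def by (simp add: powr_def mult.commute flip: exp_add)
qed

lemma L7: "ln (4::real) \<le> 3/8 + pi / 2"
proof -
  have s: "sqrt 2 \<le> (142/100::real)"
  proof -
    have "sqrt 2 \<le> sqrt ((142/100::real)^2)" by (intro real_sqrt_le_mono) (simp add: power2_eq_square)
    then show ?thesis by simp
  qed
  have "ln (sqrt 2) \<le> sqrt 2 - 1" by (intro ln_le_minus_one) auto
  moreover have "ln (4::real) = 4 * ln (sqrt 2)"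
  proof -
    have "(4::real) = (sqrt 2 * sqrt 2) * (sqrt 2 * sqrt 2)" by simp
    then have "(4::real) = sqrt 2 ^ 4" by (simp add: eval_nat_numeral)
    then show ?thesis by (metis ln_realpow real_sqrt_gt_zero zero_less_numeral of_nat_numeral)
  qed
  ultimately show ?thesis using s pi_gt3 by linarith
qed
lemma one_le_mult_real: "1 \<le> (x::real) \<Longrightarrow> 1 \<le> y \<Longrightarrow> 1 \<le> x * y"
  using mult_mono[of 1 x 1 y] by simp

theorem lemma2p2:
  fixes \<sigma> :: real
  shows "\<exists>C V0. C > 0 \<and> V0 > 0 \<and>
    (\<forall>(r::nat) (v::real). r \<ge> 1 \<longrightarrow> \<bar>v\<bar> \<ge> V0 \<longrightarrow>
      (let s = Complex \<sigma> v in
        norm ((of_nat r + s - 1) gchoose r)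
          \<le> C * ((real r + \<bar>v\<bar>) powr (\<sigma> - 1/2) * exp (norm s))
               / (sqrt (real r) * \<bar>v\<bar> powr (\<sigma> - 1/2))
               * exp (pi / 2 * \<bar>v\<bar>)))"
proof -
  define \<tau> where "\<tau> = \<bar>\<sigma>\<bar>"
  define a where "a = \<sigma> - 1/2"
  define D where "D = \<bar>\<sigma> - 1\<bar> + 2 * \<bar>a\<bar>"
  define K1 where "K1 = exp (D * ln (8 * D + 8)) * exp ((\<tau> + 4) / 8)"
  define C where "C = 4 powr (\<tau> + 3) * K1"
  have Cpos: "C > 0" unfolding C_def K1_def by simp
  have D0: "D \<ge> 0" unfolding D_def by simp
  have tau0: "\<tau> \<ge> 0" unfolding \<tau>_def by simp
  have sig: "- \<sigma> \<le> \<tau>" "\<sigma> \<le> \<tau>" unfolding \<tau>_def by auto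
  have main: "let s = Complex \<sigma> v in norm ((of_nat r + s - 1) gchoose r)
          \<le> C * ((real r + \<bar>v\<bar>) powr (\<sigma> - 1/2) * exp (norm s))
               / (sqrt (real r) * \<bar>v\<bar> powr (\<sigma> - 1/2))
               * exp (pi / 2 * \<bar>v\<bar>)" if r: "r \<ge> 1" and v: "\<bar>v\<bar> \<ge> 1" for r :: nat and v :: real
  proof -
    define V where "V = \<bar>v\<bar>"
    define s where "s = Complex \<sigma> v"
    define N where "N = nat \<lceil>V + \<tau> + 2\<rceil>"
    have V1: "V \<ge> 1" using v unfolding V_def .
    have c0: "0 \<le> \<lceil>V + \<tau> + 2\<rceil>" using V1 tau0 by simp
    have rN: "real N = of_int \<lceil>V + \<tau> + 2\<rceil>" unfolding N_def using c0 by simp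
    have N1: "real N \<ge> V + \<tau> + 2" unfolding rN by (rule le_of_int_ceiling)
    have N2: "real N \<le> V + \<tau> + 3" unfolding rN using of_int_ceiling_le_add_one[of "V + \<tau> + 2"] by simp
    have Nge1: "N \<ge> 1" using N1 V1 tau0 by linarith
    have ns1: "norm s \<le> \<tau> + V" unfolding s_def \<tau>_def V_def using cmod_le[of "Complex \<sigma> v"] by simp
    have ns2: "V \<le> norm s" unfolding s_def V_def using abs_Im_le_cmod[of "Complex \<sigma> v"] by simp
    have L1': "norm ((of_nat r + s - 1) gchoose r) = (\<Prod>k<r. norm (s + of_nat k) / real (Suc k))"
      by (rule L1)
    have head: "\<And>k. norm (s + of_nat k) \<le> real N + real k"
    proof -
      fix k
      have "norm (s + of_nat k) \<le> norm s + real k" using norm_triangle_ineq[of s "of_nat k"] by simp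
      then show "norm (s + of_nat k) \<le> real N + real k" using ns1 N1 by linarith
    qed
    have B: "(\<Prod>k<r. norm (s + of_nat k) / real (Suc k))
        \<le> 4 ^ N * exp (V / 2) * (real r powr (\<sigma> - 1) * real (Suc N) powr \<bar>\<sigma> - 1\<bar>)"
    proof (cases "r \<le> N")
      case True
      have h: "(\<Prod>k<r. norm (s + of_nat k) / real (Suc k)) \<le> 4 ^ N"
        using True Nge1 head by (intro L2) auto
      have "1 \<le> real r powr (\<sigma> - 1) * real (Suc N) powr \<bar>\<sigma> - 1\<bar>"
      proof (cases "\<sigma> \<ge> 1")
        case True
        have "1 \<le> real r powr (\<sigma> - 1)" using r True by (auto simp: ge_one_powr_ge_zero)
        moreover have "1 \<le> real (Suc N) powr \<bar>\<sigma> - 1\<bar>" by (auto simp: ge_one_powr_ge_zero)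
        ultimately show ?thesis by (rule one_le_mult_real)
      next
        case False
        have "real (Suc N) powr (\<sigma> - 1) \<le> real r powr (\<sigma> - 1)"
          using False r \<open>r \<le> N\<close> by (intro powr_mono2') auto
        moreover have "real (Suc N) powr (\<sigma> - 1) * real (Suc N) powr \<bar>\<sigma> - 1\<bar> = 1"
          using False by (simp add: powr_add[symmetric] del: of_nat_Suc)
        ultimately show ?thesis
          using mult_right_mono[of "real (Suc N) powr (\<sigma> - 1)" "real r powr (\<sigma> - 1)" "real (Suc N) powr \<bar>\<sigma> - 1\<bar>"]
          by simp
      qed
      moreover have "1 \<le> exp (V / 2)" using V1 by simp
      ultimately have "1 \<le> exp (V / 2) * (real r powr (\<sigma> - 1) * real (Suc N) powr \<bar>\<sigma> - 1\<bar>)"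
        using one_le_mult_real by blast
      then have "(4::real) ^ N * 1 \<le> 4 ^ N * (exp (V / 2) * (real r powr (\<sigma> - 1) * real (Suc N) powr \<bar>\<sigma> - 1\<bar>))"
        by (rule mult_left_mono) simp
      then have "(4::real) ^ N \<le> 4 ^ N * exp (V / 2) * (real r powr (\<sigma> - 1) * real (Suc N) powr \<bar>\<sigma> - 1\<bar>)"
        by (simp only: mult_1_right mult.assoc)
      from order.trans[OF h this] show ?thesis .
    next
      case False
      have split: "(\<Prod>k<r. norm (s + of_nat k) / real (Suc k)) =
          (\<Prod>k<N. norm (s + of_nat k) / real (Suc k)) * (\<Prod>k=N..<r. norm (s + of_nat k) / real (Suc k))"
        using False prod.atLeastLessThan_concat[of 0 N r "\<lambda>k. norm (s + of_nat k) / real (Suc k)"]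
        by (simp add: atLeast0LessThan)
      have h: "(\<Prod>k<N. norm (s + of_nat k) / real (Suc k)) \<le> 4 ^ N"
        using Nge1 head by (intro L2) auto
      have pos: "real k + \<sigma> > 0" if "k \<ge> N" for k
      proof -
        have "real N \<le> real k" using that by simp
        moreover have "- \<sigma> \<le> \<tau>" unfolding \<tau>_def by simp
        ultimately show ?thesis using N1 V1 by linarith
      qed
      have t1: "(\<Prod>k=N..<r. norm (s + of_nat k) / real (Suc k))
          \<le> (\<Prod>k=N..<r. (real k + \<sigma>) / real (Suc k) * exp (V\<^sup>2 / (2 * (real k + \<sigma>)\<^sup>2)))"
      proof (intro prod_mono conjI)
        fix k assume k: "k \<in> {N..<r}"
        have "s + of_nat k = Complex (real k + \<sigma>) v" unfolding s_def by (simp add: complex_eq_iff)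
        then have "norm (s + of_nat k) = sqrt ((real k + \<sigma>)\<^sup>2 + V\<^sup>2)"
          unfolding V_def by (simp add: complex_norm)
        also have "\<dots> \<le> (real k + \<sigma>) * exp (V\<^sup>2 / (2 * (real k + \<sigma>)\<^sup>2))"
          using pos k by (intro L3) auto
        finally show "norm (s + of_nat k) / real (Suc k) \<le> (real k + \<sigma>) / real (Suc k) * exp (V\<^sup>2 / (2 * (real k + \<sigma>)\<^sup>2))"
          by (simp add: divide_right_mono field_simps del: of_nat_Suc)
      qed simp
      also have "\<dots> = (\<Prod>k=N..<r. (real k + \<sigma>) / real (Suc k)) * exp (\<Sum>k=N..<r. V\<^sup>2 / (2 * (real k + \<sigma>)\<^sup>2))"
        by (simp only: prod.distrib exp_sum[OF finite_atLeastLessThan])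
      also have "\<dots> \<le> (real r powr (\<sigma> - 1) * real (Suc N) powr \<bar>\<sigma> - 1\<bar>) * exp (V / 2)"
      proof (intro mult_mono)
        show "(\<Prod>k=N..<r. (real k + \<sigma>) / real (Suc k)) \<le> real r powr (\<sigma> - 1) * real (Suc N) powr \<bar>\<sigma> - 1\<bar>"
          using Nge1 False pos[of N] by (intro L4) auto
        have "(\<Sum>k=N..<r. V\<^sup>2 / (2 * (real k + \<sigma>)\<^sup>2)) = V\<^sup>2 / 2 * (\<Sum>k=N..<r. 1 / (real k + \<sigma>)\<^sup>2)"
          by (simp add: sum_distrib_left)
        also have "\<dots> \<le> V\<^sup>2 / 2 * (1 / (real N + \<sigma> - 1))"
          using N1 V1 sig False by (intro mult_left_mono L5) auto
        also have "\<dots> \<le> V / 2"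
        proof -
          have p: "real N + \<sigma> - 1 \<ge> V" using N1 sig by linarith
          have "V\<^sup>2 / 2 * (1 / (real N + \<sigma> - 1)) = V / 2 * (V / (real N + \<sigma> - 1))"
            by (simp add: power2_eq_square)
          also have "\<dots> \<le> V / 2 * 1"
            using p V1 by (intro mult_left_mono) auto
          finally show ?thesis by simp
        qed
        finally show "exp (\<Sum>k=N..<r. V\<^sup>2 / (2 * (real k + \<sigma>)\<^sup>2)) \<le> exp (V / 2)" by simp
      qed simp_all
      finally have t: "(\<Prod>k=N..<r. norm (s + of_nat k) / real (Suc k)) \<le> (real r powr (\<sigma> - 1) * real (Suc N) powr \<bar>\<sigma> - 1\<bar>) * exp (V / 2)" .
      show ?thesis
      proof -
        have "0 \<le> (\<Prod>k=N..<r. norm (s + of_nat k) / real (Suc k))"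
          by (intro prod_nonneg) simp
        from mult_mono[OF h t _ this] show ?thesis unfolding split by (simp add: mult_ac del: of_nat_Suc)
      qed
    qed
    show "let s = Complex \<sigma> v in norm ((of_nat r + s - 1) gchoose r)
          \<le> C * ((real r + \<bar>v\<bar>) powr (\<sigma> - 1/2) * exp (norm s))
               / (sqrt (real r) * \<bar>v\<bar> powr (\<sigma> - 1/2))
               * exp (pi / 2 * \<bar>v\<bar>)"
    proof -
      define X where "X = real r powr (\<sigma> - 1)"
      define Q where "Q = real (Suc N) powr \<bar>\<sigma> - 1\<bar>"
      define P where "P = (1 + V) powr \<bar>a\<bar>"
      define W where "W = V + \<tau> + 4"
      define Rr where "Rr = (real r + V) powr a / sqrt (real r)"
      have Rr0: "0 \<le> Rr" unfolding Rr_def by simp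
      have Xpos: "X > 0" unfolding X_def using r by simp
      have Ppos: "P > 0" unfolding P_def using V1 by simp
      have Qpos: "Q > 0" unfolding Q_def by simp
      have R: "X / P \<le> Rr"
      proof -
        have rpos: "real r > 0" using r by simp
        have e1: "(real r + V) powr a = real r powr a * ((real r + V) / real r) powr a"
          using rpos V1 by (simp add: powr_divide)
        have e2: "sqrt (real r) = real r powr (1/2)" using rpos by (simp add: powr_half_sqrt)
        have e3: "real r powr a / real r powr (1/2) = X"
          unfolding X_def a_def using rpos by (simp add: powr_diff[symmetric])
        have g: "1 / P \<le> ((real r + V) / real r) powr a"
        proof (cases "a \<ge> 0")
          case True
          have "1 / P \<le> 1" using Ppos unfolding P_def using V1 by (auto simp: ge_one_powr_ge_zero)
          also have "1 \<le> ((real r + V) / real r) powr a"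
            using True rpos V1 by (intro ge_one_powr_ge_zero) auto
          finally show ?thesis .
        next
          case False
          have "1 / P = (1 + V) powr a" unfolding P_def using False V1
            by (simp add: powr_minus_divide[symmetric])
          also have "\<dots> \<le> ((real r + V) / real r) powr a"
          proof (intro powr_mono2')
            show "(real r + V) / real r \<le> 1 + V"
              using rpos r V1 by (simp add: field_simps)
          qed (use False rpos V1 in auto)
          finally show ?thesis .
        qed
        have "X / P = X * (1 / P)" by simp
        also have "\<dots> \<le> X * ((real r + V) / real r) powr a"
          using Xpos g by (intro mult_left_mono) auto
        also have "\<dots> = Rr" unfolding Rr_def e1 e2 e3[symmetric] by simp
        finally show ?thesis .
      qed
      have Vp: "V powr a \<le> P"
      proof (cases "a \<ge> 0")
        case True
        have "V powr a \<le> (1 + V) powr a" using True V1 by (intro powr_mono2) auto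
        then show ?thesis unfolding P_def using True by simp
      next
        case False
        have "V powr a \<le> V powr 0" using False V1 by (intro powr_mono) auto
        then have "V powr a \<le> 1" using V1 by simp
        also have "1 \<le> P" unfolding P_def using V1 by (auto simp: ge_one_powr_ge_zero)
        finally show ?thesis .
      qed
      have F: "4 ^ N * exp (V / 2) * Q * P * P \<le> C * exp V * exp (pi / 2 * V)"
      proof -
        have "(4::real) ^ N = 4 powr real N" by (simp add: powr_realpow)
        also have "\<dots> \<le> 4 powr (V + \<tau> + 3)" using N2 by (intro powr_mono) auto
        also have "\<dots> = 4 powr (\<tau> + 3) * exp (V * ln 4)"
          by (simp add: powr_def algebra_simps exp_add)
        finally have f1: "(4::real) ^ N \<le> 4 powr (\<tau> + 3) * exp (V * ln 4)" .
        have W1: "W \<ge> 1" unfolding W_def using V1 tau0 by simp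
        have "Q \<le> W powr \<bar>\<sigma> - 1\<bar>" unfolding Q_def W_def using N2 by (intro powr_mono2) auto
        moreover have "P \<le> W powr \<bar>a\<bar>" unfolding P_def W_def using V1 tau0 by (intro powr_mono2) auto
        ultimately have "Q * P * P \<le> W powr \<bar>\<sigma> - 1\<bar> * W powr \<bar>a\<bar> * W powr \<bar>a\<bar>"
          using Ppos Qpos by (intro mult_mono) auto
        also have "\<dots> = W powr D" unfolding D_def by (simp add: powr_add[symmetric] add.commute)
        also have "\<dots> \<le> exp (D * ln (8 * D + 8)) * exp (W / 8)" using W1 D0 by (intro L6) auto
        also have "\<dots> = K1 * exp (V / 8)" unfolding K1_def W_def by (simp add: field_simps flip: exp_add)
        finally have f2: "Q * P * P \<le> K1 * exp (V / 8)" .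
        have "4 ^ N * exp (V / 2) * Q * P * P = 4 ^ N * exp (V / 2) * (Q * P * P)" by (simp add: mult_ac)
        also have "\<dots> \<le> (4 powr (\<tau> + 3) * exp (V * ln 4)) * exp (V / 2) * (K1 * exp (V / 8))"
          using Ppos Qpos by (intro mult_mono[OF mult_mono[OF f1 order.refl] f2]) auto
        also have "\<dots> = C * exp (V * (ln 4 + 5/8))" unfolding C_def
          by (simp add: field_simps flip: exp_add)
        also have "\<dots> \<le> C * exp (V * (1 + pi / 2))"
          using L7 Cpos V1 by (intro mult_left_mono) auto
        also have "\<dots> = C * exp V * exp (pi / 2 * V)" by (simp add: field_simps flip: exp_add)
        finally show ?thesis .
      qed
      have B': "norm ((of_nat r + s - 1) gchoose r) \<le> X * (4 ^ N * exp (V / 2) * Q)"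
        using B L1' unfolding X_def Q_def by (simp add: mult_ac)
      also have "\<dots> \<le> X * (C * exp V * exp (pi / 2 * V) / (P * P))"
        using F Ppos Xpos by (intro mult_left_mono) (auto simp: field_simps)
      also have "\<dots> = C * (X / P) * exp V / P * exp (pi / 2 * V)" by (simp add: field_simps)
      also have "\<dots> \<le> C * Rr * exp (norm s) / V powr a * exp (pi / 2 * V)"
      proof -
        have "C * (X / P) * exp V \<le> C * Rr * exp (norm s)"
          using R ns2 Cpos Xpos Ppos Rr0 by (intro mult_mono mult_left_mono) auto
        moreover have "0 < V powr a" using V1 by simp
        ultimately have "C * (X / P) * exp V / P \<le> C * Rr * exp (norm s) / V powr a"
          using Vp Cpos Xpos Ppos Rr0 by (intro frac_le) auto
        then show ?thesis by (intro mult_right_mono) auto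
      qed
      also have "\<dots> = C * ((real r + \<bar>v\<bar>) powr (\<sigma> - 1/2) * exp (norm s))
               / (sqrt (real r) * \<bar>v\<bar> powr (\<sigma> - 1/2)) * exp (pi / 2 * \<bar>v\<bar>)"
        unfolding Rr_def V_def a_def by (simp add: field_simps)
      finally show ?thesis unfolding s_def Let_def .
    qed
  qed
  show ?thesis
    using Cpos main by (intro exI[of _ C] exI[of _ 1]) auto
qed
end
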